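(* Let $N(n)$ be the number of inflection points of the Hilbert curve $H_n$. Then $N(1)=4$, $N(2k)=4N(2k-1)-2$ and $N(2k+1)=4N(2k)-4$ for all $k\ge1$, and hence $$N(n)=\begin{cases}\dfrac{4^{n+1}+4}{5}, & n \text{ odd},\\[2mm] \dfrac{4^{n+1}+6}{5}, & n\text{ even}.\end{cases}$$
   Context: The Hilbert curve at step $n$ is the polygon $H_n$ in the unit square defined recursively: $H_1$ has vertices $(\tfrac14,\tfrac14),(\tfrac14,\tfrac34),(\tfrac34,\tfrac34),(\tfrac34,\tfrac14)$; $H_{n+1}$ is the concatenation (in this order, joined by the connecting edges) of $f_1(H_n),f_2(H_n),f_3(H_n),f_4(H_n)$, where $f_1(x,y)=(\tfrac y2,\tfrac x2)$, $f_2(x,y)=(\tfrac x2,\tfrac y2+\tfrac12)$, $f_3(x,y)=(\tfrac x2+\tfrac12,\tfrac y2+\tfrac12)$, $f_4(x,y)=(1-\tfrac y2,\tfrac12-\tfrac x2)$, each copy traversed in the order inherited from $H_n$. The inflection points of $H_n$ are the vertices of $H_n$, in order, after deleting every interior vertex whose two neighbouring vertices are collinear with it (endpoints are kept). *)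

theory Defs
  imports "HOL-Analysis.Analysis"
begin

definition hf1 :: "real \<times> real \<Rightarrow> real \<times> real" where
  "hf1 p = (snd p / 2, fst p / 2)"
definition hf2 :: "real \<times> real \<Rightarrow> real \<times> real" where
  "hf2 p = (fst p / 2, snd p / 2 + 1/2)"
definition hf3 :: "real \<times> real \<Rightarrow> real \<times> real" where
  "hf3 p = (fst p / 2 + 1/2, snd p / 2 + 1/2)"
definition hf4 :: "real \<times> real \<Rightarrow> real \<times> real" where
  "hf4 p = (1 - snd p / 2, 1/2 - fst p / 2)"

text \<open>Vertex list of the Hilbert polygon H_n (meaningful for n \<ge> 1; H_0 is a dummy).\<close>
fun hilbert :: "nat \<Rightarrow> (real \<times> real) list" where
  "hilbert 0 = []"
| "hilbert (Suc 0) = [(1/4, 1/4), (1/4, 3/4), (3/4, 3/4), (3/4, 1/4)]"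
| "hilbert (Suc (Suc n)) =
     map hf1 (hilbert (Suc n)) @ map hf2 (hilbert (Suc n)) @
     map hf3 (hilbert (Suc n)) @ map hf4 (hilbert (Suc n))"

definition inflection_points :: "(real \<times> real) list \<Rightarrow> (real \<times> real) list" where
  "inflection_points xs =
     [xs ! i. i \<leftarrow> [0..<length xs],
        i = 0 \<or> i = length xs - 1 \<or> \<not> collinear {xs ! (i - 1), xs ! i, xs ! (i + 1)}]"

definition num_inflection :: "nat \<Rightarrow> nat" where
  "num_inflection n = length (inflection_points (hilbert n))"

end

theory Submission
  imports Defs
begin

definition cr :: "real\<times>real \<Rightarrow> real\<times>real \<Rightarrow> real\<times>real \<Rightarrow> real" where
  "cr a b c = (fst b - fst a)*(snd c - snd b) - (snd b - snd a)*(fst c - fst b)"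

lemma col0: "collinear {0, u, v::real\<times>real} \<longleftrightarrow> fst u * snd v = snd u * fst v"
proof -
  have "(u = 0 \<or> v = 0 \<or> (\<exists>c. v = c *\<^sub>R u)) \<longleftrightarrow> fst u * snd v = snd u * fst v"
  proof
    assume "u = 0 \<or> v = 0 \<or> (\<exists>c. v = c *\<^sub>R u)" then show "fst u * snd v = snd u * fst v"
      by (auto simp: algebra_simps)
  next
    assume h: "fst u * snd v = snd u * fst v"
    show "u = 0 \<or> v = 0 \<or> (\<exists>c. v = c *\<^sub>R u)"
    proof (cases "fst u = 0")
      case True
      show ?thesis
      proof (cases "snd u = 0")
        case True with \<open>fst u = 0\<close> show ?thesis by (simp add: prod_eq_iff)
      next
        case False
        with h True have "fst v = 0" by simp
        then have "v = (snd v / snd u) *\<^sub>R u" using False True by (simp add: prod_eq_iff)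
        then show ?thesis by blast
      qed
    next
      case False
      have "snd v = snd u * fst v / fst u" using h False by (simp add: field_simps)
      then have "v = (fst v / fst u) *\<^sub>R u" using False by (simp add: prod_eq_iff)
      then show ?thesis by blast
    qed
  qed
  then show ?thesis by (simp add: collinear_lemma)
qed

lemma col_cr: "collinear {a, b, c} \<longleftrightarrow> cr a b c = 0"
proof (cases "a = 0")
  case True
  then show ?thesis by (simp add: col0 cr_def algebra_simps) 
next
  case False
  have "collinear {a,b,c} \<longleftrightarrow> collinear {0, a-b, c-b}" using False by (simp add: collinear_3)
  also have "\<dots> \<longleftrightarrow> cr a b c = 0" by (simp add: col0 cr_def algebra_simps; linarith)
  finally show ?thesis .
qed

fun tc :: "(real\<times>real) list \<Rightarrow> nat" where
  "tc (a#b#c#r) = (if cr a b c = 0 then 0 else 1) + tc (b#c#r)"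
| "tc _ = 0"

lemma comp_eq: "[f i. i \<leftarrow> l, P i] = map f (filter P l)" by (induct l) auto

lemma filt_suc: "length (filter P [0..<Suc m]) = (if P 0 then 1 else 0) + length (filter (P o Suc) [0..<m])"
  by (simp add: upt_conv_Cons map_Suc_upt[symmetric] filter_map del: upt_Suc)

lemma tc_idx: "tc xs = length (filter (\<lambda>i. cr (xs!i) (xs!Suc i) (xs!Suc(Suc i)) \<noteq> 0) [0..<length xs - 2])"
proof (induct xs rule: tc.induct)
  case (1 a b c r)
  show ?case
    using 1 by (simp add: filt_suc[of _ "length r"] o_def del: upt_Suc)
qed auto

lemma num_tc:
  assumes "length xs \<ge> 2"
  shows "length (inflection_points xs) = tc xs + 2"
proof -
  obtain m where m: "length xs = Suc (Suc m)" using assms by (metis add_2_eq_Suc le_Suc_ex)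
  define P where "P i = (i = 0 \<or> i = length xs - 1 \<or> \<not> collinear {xs ! (i - 1), xs ! i, xs ! (i + 1)})" for i
  have "length (inflection_points xs) = length (filter P [0..<Suc (Suc m)])"
    unfolding inflection_points_def comp_eq P_def m by simp
  also have "\<dots> = 1 + length (filter (P o Suc) [0..<Suc m])"
    by (subst filt_suc) (simp add: P_def)
  also have "\<dots> = 1 + length (filter (P o Suc) [0..<m]) + 1"
    by (simp add: P_def m)
  also have "filter (P o Suc) [0..<m] = filter (\<lambda>i. cr (xs!i) (xs!Suc i) (xs!Suc(Suc i)) \<noteq> 0) [0..<m]"
    by (rule filter_cong) (auto simp: P_def m col_cr)
  finally show ?thesis by (simp add: tc_idx m)
qed

lemma tc_app:
  assumes "length xs \<ge> 2" "length ys \<ge> 2"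
  shows "tc (xs @ ys) = tc xs + tc ys + (if cr (last (butlast xs)) (last xs) (hd ys) = 0 then 0 else 1)
     + (if cr (last xs) (hd ys) (hd (tl ys)) = 0 then 0 else 1)"
  using assms(1)
proof (induct xs)
  case Nil then show ?case by simp
next
  case (Cons a xs')
  obtain c d r where ys: "ys = c # d # r" using assms(2)
    by (metis Suc_le_length_iff numeral_2_eq_2)
  show ?case
  proof (cases xs')
    case Nil then show ?thesis using Cons by simp
  next
    case (Cons b xs'')
    show ?thesis
    proof (cases xs'')
      case Nil then show ?thesis using Cons ys by simp
    next
      case (Cons b' r')
      have "length xs' \<ge> 2" using \<open>xs' = b # xs''\<close> Cons by simp
      then show ?thesis using \<open>length xs' \<ge> 2 \<Longrightarrow> _\<close> \<open>xs' = b # xs''\<close> Cons by simp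
    qed
  qed
qed

lemma tc_map: "(\<And>a b c. cr (f a) (f b) (f c) = k * cr a b c) \<Longrightarrow> k \<noteq> 0 \<Longrightarrow> tc (map f xs) = tc xs"
  by (induct xs rule: tc.induct) auto

lemma cr1: "cr (hf1 a) (hf1 b) (hf1 c) = (-1/4) * cr a b c" by (simp add: cr_def hf1_def algebra_simps)
lemma cr2: "cr (hf2 a) (hf2 b) (hf2 c) = (1/4) * cr a b c" by (simp add: cr_def hf2_def algebra_simps)
lemma cr3: "cr (hf3 a) (hf3 b) (hf3 c) = (1/4) * cr a b c" by (simp add: cr_def hf3_def algebra_simps)
lemma cr4: "cr (hf4 a) (hf4 b) (hf4 c) = (-1/4) * cr a b c" by (simp add: cr_def hf4_def algebra_simps)

lemma hil_facts:
  fixes n :: nat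
  defines "e \<equiv> (1/2::real)^(n+2)"
  shows "length (hilbert (Suc n)) = 4^(Suc n)
   \<and> hd (hilbert (Suc n)) = (e, e)
   \<and> hd (tl (hilbert (Suc n))) = (if odd (Suc n) then (e, 3*e) else (3*e, e))
   \<and> last (hilbert (Suc n)) = (1-e, e)
   \<and> last (butlast (hilbert (Suc n))) = (if odd (Suc n) then (1-e, 3*e) else (1-3*e, e))"
  unfolding e_def
proof (induct n)
  case 0
  then show ?case by simp
next
  case (Suc n)
  let ?H = "hilbert (Suc n)"
  let ?e = "(1/2::real)^(n+2)"
  have e': "(1/2::real)^(Suc n + 2) = ?e / 2" by simp
  have len: "length ?H \<ge> 2" using Suc by (simp add: self_le_power order_trans[of 2 4])
  then obtain a b r where H: "?H = a # b # r" by (metis Suc_le_length_iff numeral_2_eq_2)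
  obtain z y rr where "rev ?H = z # y # rr" using len
    by (metis Suc_le_length_iff numeral_2_eq_2 length_rev)
  then have H2: "?H = rev rr @ [y, z]" by (metis rev_rev_ident rev.simps append.simps append_assoc)
  have f1: "hd ?H = a" "hd (tl ?H) = b" using H by simp_all
  have f2: "last ?H = z" "last (butlast ?H) = y" using H2 by (simp_all add: butlast_append)
  have IH: "a = (?e, ?e)" "b = (if odd (Suc n) then (?e, 3*?e) else (3*?e, ?e))"
     "z = (1 - ?e, ?e)" "y = (if odd (Suc n) then (1-?e, 3*?e) else (1-3*?e, ?e))"
    using Suc unfolding f1 f2 by simp_all
  have L: "length (hilbert (Suc (Suc n))) = 4^(Suc (Suc n))" using Suc by simp
  have hd: "hd (hilbert (Suc (Suc n))) = hf1 a" using H by simp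
  have hd2: "hd (tl (hilbert (Suc (Suc n)))) = hf1 b" using H by simp
  have lt: "last (hilbert (Suc (Suc n))) = hf4 z" using H2 by simp
  have lb: "last (butlast (hilbert (Suc (Suc n)))) = hf4 y" using H2 by (simp add: butlast_append)
  show ?case unfolding e' using L hd hd2 lt lb IH
    by (auto simp: hf1_def hf4_def field_simps)
qed

definition jsum where "jsum a b y z =
        (if cr (hf3 y) (hf3 z) (hf4 a) = 0 then 0 else 1::nat)
      + (if cr (hf3 z) (hf4 a) (hf4 b) = 0 then 0 else 1)
      + (if cr (hf2 y) (hf2 z) (hf3 a) = 0 then 0 else 1)
      + (if cr (hf2 z) (hf3 a) (hf3 b) = 0 then 0 else 1)
      + (if cr (hf1 y) (hf1 z) (hf2 a) = 0 then 0 else 1)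
      + (if cr (hf1 z) (hf2 a) (hf2 b) = 0 then 0 else 1)"
lemma j_odd: "e > 0 \<Longrightarrow> jsum (e,e) (e,3*e) (1-e,3*e) (1-e,e) = 4"
  by (simp add: jsum_def cr_def hf1_def hf2_def hf3_def hf4_def field_simps)
lemma j_even: "e > 0 \<Longrightarrow> jsum (e,e) (3*e,e) (1-3*e,e) (1-e,e) = 2"
  by (simp add: jsum_def cr_def hf1_def hf2_def hf3_def hf4_def field_simps)

lemma hil_len2: "length (hilbert (Suc n)) \<ge> 2"
proof -
  have "length (hilbert (Suc n)) = 4^(Suc n)" by (rule hil_facts[of n, THEN conjunct1])
  moreover have "(4::nat)^(Suc n) \<ge> 4" by (rule self_le_power) simp_all
  ultimately show ?thesis by linarith
qed

lemma tc_rec: "tc (hilbert (Suc (Suc n))) = 4 * tc (hilbert (Suc n)) + (if odd (Suc n) then 4 else 2)"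
proof -
  let ?H = "hilbert (Suc n)"
  have len: "length ?H \<ge> 2" by (rule hil_len2)
  then obtain a b r where H: "?H = a # b # r" by (metis Suc_le_length_iff numeral_2_eq_2)
  have ne: "?H \<noteq> []" "butlast ?H \<noteq> []" "tl ?H \<noteq> []" unfolding H by simp_all
  have eq: "hilbert (Suc (Suc n)) = map hf1 ?H @ (map hf2 ?H @ (map hf3 ?H @ map hf4 ?H))" by simp
  have t: "tc (map hf1 ?H) = tc ?H" "tc (map hf2 ?H) = tc ?H" "tc (map hf3 ?H) = tc ?H" "tc (map hf4 ?H) = tc ?H"
    apply (rule tc_map[OF cr1], simp) apply (rule tc_map[OF cr2], simp) apply (rule tc_map[OF cr3], simp) by (rule tc_map[OF cr4], simp)
  have "tc (hilbert (Suc (Suc n))) = 4 * tc ?H + jsum (hd ?H) (hd (tl ?H)) (last (butlast ?H)) (last ?H)"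
    unfolding eq jsum_def using len ne
    by (simp add: tc_app t last_map map_butlast[symmetric] hd_map map_tl[symmetric] hd_append)
  also have "\<dots> = 4 * tc ?H + (if odd (Suc n) then 4 else 2)"
  proof (cases "odd (Suc n)")
    case True
    then have "jsum (hd ?H) (hd (tl ?H)) (last (butlast ?H)) (last ?H)
       = jsum ((1/2)^(n+2), (1/2)^(n+2)) ((1/2)^(n+2), 3*(1/2)^(n+2)) (1-(1/2)^(n+2), 3*(1/2)^(n+2)) (1-(1/2)^(n+2), (1/2)^(n+2))"
      using hil_facts[of n] by simp
    then show ?thesis using True j_odd[of "(1/2)^(n+2)"] by simp
  next
    case False
    then have "jsum (hd ?H) (hd (tl ?H)) (last (butlast ?H)) (last ?H)
       = jsum ((1/2)^(n+2), (1/2)^(n+2)) (3*(1/2)^(n+2), (1/2)^(n+2)) (1-3*(1/2)^(n+2), (1/2)^(n+2)) (1-(1/2)^(n+2), (1/2)^(n+2))"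
      using hil_facts[of n] by simp
    then show ?thesis using False j_even[of "(1/2)^(n+2)"] by simp
  qed
  finally show ?thesis .
qed

lemma N_tc: "num_inflection (Suc n) = tc (hilbert (Suc n)) + 2"
  unfolding num_inflection_def by (rule num_tc[OF hil_len2])

lemma N_rec: "int (num_inflection (Suc (Suc n))) = 4 * int (num_inflection (Suc n)) - (if odd (Suc n) then 2 else 4)"
  unfolding N_tc tc_rec by simp

lemma N_closed: "5 * num_inflection (Suc n) = 4^(n+2) + (if odd (Suc n) then 4 else 6)"
proof (induct n)
  case 0 then show ?case by (simp add: N_tc cr_def)
next
  case (Suc n)
  have "int (5 * num_inflection (Suc (Suc n))) = 5 * (4 * int (num_inflection (Suc n)) - (if odd (Suc n) then 2 else 4))"
    using N_rec[of n] by simp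
  also have "\<dots> = 4 * int (5 * num_inflection (Suc n)) - (if odd (Suc n) then 10 else 20)" by simp
  also have "\<dots> = int (4^(Suc n+2) + (if odd (Suc (Suc n)) then 4 else 6))" unfolding Suc by auto
  finally show ?case by (simp only: of_nat_eq_iff)
qed

theorem mainTheorem9:
  shows "num_inflection 1 = 4
    \<and> (\<forall>k::nat. k \<ge> 1 \<longrightarrow>
         int (num_inflection (2*k)) = 4 * int (num_inflection (2*k - 1)) - 2
       \<and> int (num_inflection (2*k + 1)) = 4 * int (num_inflection (2*k)) - 4)
    \<and> (\<forall>n::nat. n \<ge> 1 \<longrightarrow>
         (odd n \<longrightarrow> real (num_inflection n) = (4 ^ (n + 1) + 4) / 5)
       \<and> (even n \<longrightarrow> real (num_inflection n) = (4 ^ (n + 1) + 6) / 5))"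
proof (intro conjI allI impI)
  show "num_inflection 1 = 4" using N_closed[of 0] by simp
next
  fix k :: nat assume k: "k \<ge> 1"
  then obtain j where j: "k = Suc j" by (cases k) auto
  have "2*k = Suc (Suc (2*j))" "2*k - 1 = Suc (2*j)" using j by simp_all
  then show "int (num_inflection (2*k)) = 4 * int (num_inflection (2*k - 1)) - 2"
    using N_rec[of "2*j"] by simp
  have "2*k + 1 = Suc (Suc (Suc (2*j)))" "2*k = Suc (Suc (2*j))" using j by simp_all
  then show "int (num_inflection (2*k + 1)) = 4 * int (num_inflection (2*k)) - 4"
    using N_rec[of "Suc (2*j)"] by simp
next
  fix n :: nat assume n: "n \<ge> 1" "odd n"
  then obtain m where m: "n = Suc m" by (cases n) auto
  have "real (5 * num_inflection n) = real (4^(n+1) + 4)" using N_closed[of m] n m by simp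
  then show "real (num_inflection n) = (4 ^ (n + 1) + 4) / 5" by simp
next
  fix n :: nat assume n: "n \<ge> 1" "even n"
  then obtain m where m: "n = Suc m" by (cases n) auto
  have "real (5 * num_inflection n) = real (4^(n+1) + 6)" using N_closed[of m] n m by simp
  then show "real (num_inflection n) = (4 ^ (n + 1) + 6) / 5" by simp
qed

end
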